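(* Let $\sigma$ be a strategy on an arena $A$. If $sm\in\sigma$ and $tn\in\sigma$ (with $m,n$ single move occurrences) and $\mathrm{GR}(s)=\mathrm{GR}(t)$, then there exists an $\mathcal O$-renaming $\varsigma$ such that $sm=(tn)\varsigma$.
   Context: First-order variables are split into three disjoint countable sets: $\mathcal A$-, $\mathcal O$- and $\mathcal P$-variables. $\mathcal{AP}$-terms (resp. $\mathcal{OP}$-terms) are first-order terms built from $\mathcal A$- and $\mathcal P$-variables (resp. $\mathcal O$- and $\mathcal P$-variables). Arena: a finite forest whose nodes (moves) carry a first-order label (a list of $\mathcal A$-variables, all distinct across the arena) and an atomic label (a list of atomic formulas $X\,t_1\dots t_k$ with $\mathcal{AP}$-terms whose $\mathcal A$-variables occur in the first-order label of the node or an ancestor). Polarity is depth parity: even = Opponent (O), odd = Player (P); roots are initial. Justified sequence: finite sequence of move occurrences; each non-initial occurrence has a $\lambda$-pointer to an earlier occurrence of its father; each element of the atomic label of an occurrence has at most one $\mu$-pointer to an element of the atomic label of an earlier occurrence of opposite polarity. Instantiations: each O-move occurrence carries an $\mathcal O$-instantiation (list of $\mathcal O$-variables of the length of its first-order label), each P-move occurrence a $\mathcal P$-instantiation (list of $\mathcal{OP}$-terms of that length); all $\mathcal O$-variables in $\mathcal O$-instantiations distinct. For an occurrence $m$ with instantiation $[t_1..t_k]$ and first-order label $[x_1..x_k]$, $\theta_m=\{x_i\mapsto t_i\}$ if $m$ is initial, else $\theta_n\cup\{x_i\mapsto t_i\}$ with $n$ its $\lambda$-justifier. Play: instantiated justified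 sequence with alternating polarities, no $\mu$-pointers from O-moves, exactly one $\mu$-pointer from each element of the atomic label of each P-move, every $\mu$-pointer from $X\,t_1..t_k$ at $m$ to $Y\,u_1..u_p$ at $n$ satisfying $X=Y$, $k=p$, $t_i\theta_m=u_i\theta_n$, and every $\mathcal O$-variable in a $\mathcal P$-instantiation occurring in an earlier $\mathcal O$-instantiation. An $\mathcal O$-renaming is an injection $\varsigma$ of $\mathcal O$-variables into themselves; $s\varsigma$ replaces each $o$ by $\varsigma(o)$ in all instantiations. Strategy: non-empty set of even-length plays closed under even-length prefixes, deterministic ($sm,sn\in\sigma\Rightarrow sm=sn$, including pointers and instantiations) and uniform (closed under $\mathcal O$-renamings). $\mathrm{GR}(s)$ is the sequence obtained from a play $s$ by erasing all instantiations and all $\mu$-pointers (keeping moves and $\lambda$-pointers). *)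

theory Defs
  imports Main
begin

datatype var = AV nat | OV nat | PV nat

datatype trm = Var var | Fn nat "trm list"

fun tvars :: "trm \<Rightarrow> var set" where
  "tvars (Var v) = {v}"
| "tvars (Fn f ts) = \<Union> (set (map tvars ts))"

fun tsubst :: "(var \<Rightarrow> trm) \<Rightarrow> trm \<Rightarrow> trm" where
  "tsubst \<rho> (Var v) = \<rho> v"
| "tsubst \<rho> (Fn f ts) = Fn f (map (tsubst \<rho>) ts)"

definition is_AV :: "var \<Rightarrow> bool" where "is_AV v \<longleftrightarrow> (\<exists>x. v = AV x)"
definition is_OV :: "var \<Rightarrow> bool" where "is_OV v \<longleftrightarrow> (\<exists>x. v = OV x)"
definition is_PV :: "var \<Rightarrow> bool" where "is_PV v \<longleftrightarrow> (\<exists>x. v = PV x)"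

definition OP_term :: "trm \<Rightarrow> bool" where
  "OP_term t \<longleftrightarrow> (\<forall>v\<in>tvars t. is_OV v \<or> is_PV v)"

text \<open>An atomic formula: a predicate symbol X applied to a list of terms.\<close>
type_synonym atom = "nat \<times> trm list"

text \<open>A forest of moves given by a parent function; first-order labels are lists of
  A-variables (given by their indices); atomic labels are lists of atomic formulas.\<close>
record 'm arena =
  moves :: "'m set"
  par   :: "'m \<Rightarrow> 'm option"
  fol   :: "'m \<Rightarrow> nat list"
  atl   :: "'m \<Rightarrow> atom list"

definition parrel :: "'m arena \<Rightarrow> ('m \<times> 'm) set" where
  "parrel A = {(p, m). m \<in> moves A \<and> par A m = Some p}"

definition ancestors :: "'m arena \<Rightarrow> 'm \<Rightarrow> 'm set" where
  "ancestors A m = {p. (p, m) \<in> (parrel A)\<^sup>+}"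

definition depth :: "'m arena \<Rightarrow> 'm \<Rightarrow> nat" where
  "depth A m = card (ancestors A m)"

definition is_O :: "'m arena \<Rightarrow> 'm \<Rightarrow> bool" where
  "is_O A m \<longleftrightarrow> even (depth A m)"

definition initial :: "'m arena \<Rightarrow> 'm \<Rightarrow> bool" where
  "initial A m \<longleftrightarrow> par A m = None"

definition arena :: "'m arena \<Rightarrow> bool" where
  "arena A \<longleftrightarrow>
     finite (moves A) \<and>
     (\<forall>m\<in>moves A. \<forall>p. par A m = Some p \<longrightarrow> p \<in> moves A) \<and>
     wf (parrel A) \<and>
     (\<forall>m\<in>moves A. distinct (fol A m)) \<and>
     (\<forall>m\<in>moves A. \<forall>m'\<in>moves A. m \<noteq> m' \<longrightarrow> set (fol A m) \<inter> set (fol A m') = {}) \<and>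
     (\<forall>m\<in>moves A. \<forall>a\<in>set (atl A m). \<forall>t\<in>set (snd a). \<forall>v\<in>tvars t.
        is_PV v \<or> (\<exists>x. v = AV x \<and> (\<exists>p\<in>insert m (ancestors A m). x \<in> set (fol A p))))"

text \<open>A move occurrence: the move, its lambda-pointer (index of an earlier occurrence),
  one optional mu-pointer per element of the atomic label (pointing to
  (occurrence index, atom index)), and its instantiation.\<close>
record 'm occ =
  mv   :: 'm
  jp   :: "nat option"
  mup  :: "(nat \<times> nat) option list"
  inst :: "trm list"

type_synonym subst = "nat \<Rightarrow> trm option"   \<comment> \<open>partial map on A-variable indices\<close>

definition theta_step :: "'m arena \<Rightarrow> subst list \<Rightarrow> 'm occ \<Rightarrow> subst list" where
  "theta_step A acc oc =
     acc @ [(case jp oc of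
               Some j \<Rightarrow> (if j < length acc then acc ! j else Map.empty)
             | None \<Rightarrow> Map.empty) ++ map_of (zip (fol A (mv oc)) (inst oc))]"

text \<open>thetas A s ! i is the substitution theta of the i-th occurrence.\<close>
definition thetas :: "'m arena \<Rightarrow> 'm occ list \<Rightarrow> subst list" where
  "thetas A s = foldl (theta_step A) [] s"

definition apply_subst :: "subst \<Rightarrow> trm \<Rightarrow> trm" where
  "apply_subst \<theta> t = tsubst (\<lambda>v. case v of AV x \<Rightarrow> (case \<theta> x of Some u \<Rightarrow> u | None \<Rightarrow> Var (AV x))
                                        | _ \<Rightarrow> Var v) t"

definition occ_O :: "'m arena \<Rightarrow> 'm occ \<Rightarrow> bool" where
  "occ_O A oc \<longleftrightarrow> is_O A (mv oc)"

definition Oinst_vars :: "'m occ \<Rightarrow> nat list" where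
  "Oinst_vars oc = map (\<lambda>t. case t of Var (OV x) \<Rightarrow> x | _ \<Rightarrow> 0) (inst oc)"

definition justified :: "'m arena \<Rightarrow> 'm occ list \<Rightarrow> bool" where
  "justified A s \<longleftrightarrow>
    (\<forall>i < length s.
       mv (s!i) \<in> moves A \<and>
       (case par A (mv (s!i)) of
          None \<Rightarrow> jp (s!i) = None
        | Some p \<Rightarrow> (\<exists>j < i. jp (s!i) = Some j \<and> mv (s!j) = p)) \<and>
       length (mup (s!i)) = length (atl A (mv (s!i))) \<and>
       (\<forall>ptr \<in> set (mup (s!i)). \<forall>j k. ptr = Some (j, k) \<longrightarrow>
          j < i \<and> k < length (atl A (mv (s!j))) \<and> (occ_O A (s!j) \<noteq> occ_O A (s!i))))"

definition instantiated :: "'m arena \<Rightarrow> 'm occ list \<Rightarrow> bool" where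
  "instantiated A s \<longleftrightarrow>
    justified A s \<and>
    (\<forall>i < length s. length (inst (s!i)) = length (fol A (mv (s!i))) \<and>
       (if occ_O A (s!i) then (\<forall>t\<in>set (inst (s!i)). \<exists>x. t = Var (OV x))
        else (\<forall>t\<in>set (inst (s!i)). OP_term t))) \<and>
    distinct (concat (map Oinst_vars (filter (occ_O A) s)))"

definition play :: "'m arena \<Rightarrow> 'm occ list \<Rightarrow> bool" where
  "play A s \<longleftrightarrow>
    instantiated A s \<and>
    (\<forall>i. Suc i < length s \<longrightarrow> occ_O A (s!Suc i) \<noteq> occ_O A (s!i)) \<and>
    (\<forall>i < length s. occ_O A (s!i) \<longrightarrow> (\<forall>ptr\<in>set (mup (s!i)). ptr = None)) \<and>
    (\<forall>i < length s. \<not> occ_O A (s!i) \<longrightarrow> (\<forall>ptr\<in>set (mup (s!i)). ptr \<noteq> None)) \<and>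
    (\<forall>i < length s. \<forall>a < length (mup (s!i)). \<forall>j k. mup (s!i) ! a = Some (j, k) \<longrightarrow>
       (let (X, ts) = atl A (mv (s!i)) ! a; (Y, us) = atl A (mv (s!j)) ! k in
        X = Y \<and> length ts = length us \<and>
        map (apply_subst (thetas A s ! i)) ts = map (apply_subst (thetas A s ! j)) us)) \<and>
    (\<forall>i < length s. \<not> occ_O A (s!i) \<longrightarrow>
       (\<forall>t\<in>set (inst (s!i)). \<forall>x. OV x \<in> tvars t \<longrightarrow>
          (\<exists>j < i. occ_O A (s!j) \<and> Var (OV x) \<in> set (inst (s!j)))))"

definition rename_trm :: "(nat \<Rightarrow> nat) \<Rightarrow> trm \<Rightarrow> trm" where
  "rename_trm \<rho> t = tsubst (\<lambda>v. case v of OV x \<Rightarrow> Var (OV (\<rho> x)) | _ \<Rightarrow> Var v) t"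

definition rename :: "(nat \<Rightarrow> nat) \<Rightarrow> 'm occ list \<Rightarrow> 'm occ list" where
  "rename \<rho> s = map (\<lambda>oc. oc\<lparr>inst := map (rename_trm \<rho>) (inst oc)\<rparr>) s"

definition O_renaming :: "(nat \<Rightarrow> nat) \<Rightarrow> bool" where
  "O_renaming \<rho> \<longleftrightarrow> inj \<rho>"

definition strategy :: "'m arena \<Rightarrow> 'm occ list set \<Rightarrow> bool" where
  "strategy A \<sigma> \<longleftrightarrow>
    \<sigma> \<noteq> {} \<and>
    (\<forall>s\<in>\<sigma>. play A s \<and> even (length s)) \<and>
    (\<forall>s\<in>\<sigma>. \<forall>n. even n \<longrightarrow> take n s \<in> \<sigma>) \<and>
    (\<forall>s a b. s @ [a] \<in> \<sigma> \<longrightarrow> s @ [b] \<in> \<sigma> \<longrightarrow> a = b) \<and>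
    (\<forall>s\<in>\<sigma>. \<forall>\<rho>. O_renaming \<rho> \<longrightarrow> rename \<rho> s \<in> \<sigma>)"

definition GR :: "'m occ list \<Rightarrow> ('m \<times> nat option) list" where
  "GR s = map (\<lambda>oc. (mv oc, jp oc)) s"

end

theory Submission
  imports Defs
begin

lemma anc_root: "par A m = None \<Longrightarrow> ancestors A m = {}"
  unfolding ancestors_def parrel_def by (auto elim: tranclE)

lemma play_parity:
  assumes "play A s" shows "i < length s \<Longrightarrow> occ_O A (s!i) \<longleftrightarrow> even i"
proof (induction i)
  case 0
  from assms have j: "justified A s" by (simp add: play_def instantiated_def)
  with 0 have "case par A (mv (s!0)) of None \<Rightarrow> jp (s!0) = None
        | Some p \<Rightarrow> (\<exists>j < 0. jp (s!0) = Some j \<and> mv (s!j) = p)"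
    unfolding justified_def by blast
  then have "par A (mv (s!0)) = None" by (auto split: option.splits)
  then show ?case by (simp add: occ_O_def is_O_def depth_def anc_root)
next
  case (Suc i)
  then have "occ_O A (s!Suc i) \<noteq> occ_O A (s!i)" using assms by (simp add: play_def)
  with Suc show ?case by auto
qed

lemma play_facts:
  assumes "play A s" "i < length s"
  shows "length (inst (s!i)) = length (fol A (mv (s!i)))"
    and "length (mup (s!i)) = length (atl A (mv (s!i)))"
    and "occ_O A (s!i) \<Longrightarrow> \<forall>t\<in>set (inst (s!i)). \<exists>x. t = Var (OV x)"
    and "occ_O A (s!i) \<Longrightarrow> \<forall>p\<in>set (mup (s!i)). p = None"
  using assms unfolding play_def instantiated_def justified_def by auto

lemma play_distinct:
  "play A s \<Longrightarrow> distinct (concat (map Oinst_vars (filter (occ_O A) s)))"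
  unfolding play_def instantiated_def by auto

lemma distinct_concat_filter:
  "distinct (concat (map f (filter P xs))) \<Longrightarrow> i < length xs \<Longrightarrow> j < length xs \<Longrightarrow>
   P (xs!i) \<Longrightarrow> P (xs!j) \<Longrightarrow> k < length (f (xs!i)) \<Longrightarrow> l < length (f (xs!j)) \<Longrightarrow>
   f (xs!i) ! k = f (xs!j) ! l \<Longrightarrow> i = j \<and> k = l"
proof (induction xs arbitrary: i j)
  case Nil then show ?case by simp
next
  case (Cons x xs)
  show ?case
  proof (cases "P x")
    case True
    then have d: "distinct (f x)" "distinct (concat (map f (filter P xs)))"
      and disj: "set (f x) \<inter> set (concat (map f (filter P xs))) = {}"
      using Cons.prems(1) by auto
    have mem: "f (xs!j') ! l' \<in> set (concat (map f (filter P xs)))"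
      if "j' < length xs" "P (xs!j')" "l' < length (f (xs!j'))" for j' l'
    proof -
      have "xs!j' \<in> set (filter P xs)" using that by auto
      moreover have "f (xs!j') ! l' \<in> set (f (xs!j'))" using that by auto
      ultimately show ?thesis by auto
    qed
    show ?thesis
    proof (cases i)
      case 0
      show ?thesis
      proof (cases j)
        case 0 with \<open>i = 0\<close> Cons.prems d show ?thesis by (simp add: nth_eq_iff_index_eq)
      next
        case (Suc j')
        have "f x ! k \<in> set (f x)" using Cons.prems(6) \<open>i = 0\<close> by (simp del: nth_mem add: nth_mem)
        moreover have "f x ! k \<in> set (concat (map f (filter P xs)))"
          using Cons.prems \<open>i = 0\<close> Suc mem[of j' l] by simp
        ultimately show ?thesis using disj by blast
      qed
    next
      case (Suc i')
      show ?thesis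
      proof (cases j)
        case 0
        have "f x ! l \<in> set (f x)" using Cons.prems(7) 0 by (simp del: nth_mem add: nth_mem)
        moreover have "f x ! l \<in> set (concat (map f (filter P xs)))"
          using Cons.prems \<open>i = Suc i'\<close> 0 mem[of i' k] by simp
        ultimately show ?thesis using disj by blast
      next
        case (Suc j')
        with \<open>i = Suc i'\<close> Cons.prems d Cons.IH[of i' j'] show ?thesis by auto
      qed
    qed
  next
    case False
    then have d: "distinct (concat (map f (filter P xs)))" using Cons.prems(1) by auto
    from False Cons.prems obtain i' j' where "i = Suc i'" "j = Suc j'"
      by (cases i; cases j; auto)
    with Cons.prems d Cons.IH[of i' j'] show ?thesis by auto
  qed
qed

lemma det_eq:
  assumes st: "strategy A \<sigma>" and u: "u \<in> \<sigma>" and v: "v \<in> \<sigma>" and len: "length u = length v"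
  and O: "\<And>i. i < length u \<Longrightarrow> occ_O A (u!i) \<Longrightarrow> u!i = v!i"
  shows "u = v"
proof -
  have pu: "play A u" using st u by (simp add: strategy_def)
  have "k \<le> length u \<Longrightarrow> take k u = take k v" for k
  proof (induction k)
    case 0 show ?case by simp
  next
    case (Suc k)
    then have k: "k < length u" by simp
    have IH: "take k u = take k v" using Suc by simp
    have "u!k = v!k"
    proof (cases "occ_O A (u!k)")
      case True with O k show ?thesis by blast
    next
      case False
      with play_parity[OF pu k] have "even (Suc k)" by simp
      then have "take (Suc k) u \<in> \<sigma>" "take (Suc k) v \<in> \<sigma>" using st u v by (auto simp: strategy_def)
      moreover have "take (Suc k) u = take k u @ [u!k]" using k by (simp add: take_Suc_conv_app_nth)
      moreover have "take (Suc k) v = take k u @ [v!k]" using k len IH by (simp add: take_Suc_conv_app_nth)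
      ultimately show ?thesis using st unfolding strategy_def by metis
    qed
    then show ?case using IH k len by (simp add: take_Suc_conv_app_nth)
  qed
  from this[of "length u"] len show ?thesis by simp
qed

lemma inst_nth_OV:
  "\<forall>t\<in>set (inst oc). \<exists>x. t = Var (OV x) \<Longrightarrow> k < length (inst oc) \<Longrightarrow>
   inst oc ! k = Var (OV (Oinst_vars oc ! k))"
proof -
  assume a: "\<forall>t\<in>set (inst oc). \<exists>x. t = Var (OV x)" and k: "k < length (inst oc)"
  then obtain x where "inst oc ! k = Var (OV x)" using nth_mem[of k "inst oc"] by blast
  then show ?thesis using k by (simp add: Oinst_vars_def)
qed

theorem mainTheorem8:
  fixes A :: "'m arena" and \<sigma> :: "'m occ list set"
    and s t :: "'m occ list" and m n :: "'m occ"
  assumes "arena A"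
    and "strategy A \<sigma>"
    and "s @ [m] \<in> \<sigma>"
    and "t @ [n] \<in> \<sigma>"
    and "GR s = GR t"
  shows "\<exists>\<rho>. O_renaming \<rho> \<and> s @ [m] = rename \<rho> (t @ [n])"
proof -
  define s' where "s' = s @ [m]"
  define t' where "t' = t @ [n]"
  have st: "strategy A \<sigma>" by fact
  have ps: "play A s'" and es: "even (length s')"
    using assms(2,3) unfolding s'_def strategy_def by auto
  have pt: "play A t'" and et: "even (length t')"
    using assms(2,4) unfolding t'_def strategy_def by auto
  have ls: "length s = length t" using arg_cong[OF assms(5), of length] by (simp add: GR_def)
  have GRi: "mv (s!i) = mv (t!i) \<and> jp (s!i) = jp (t!i)" if "i < length s" for i
    using arg_cong[OF assms(5), of "\<lambda>l. l ! i"] that ls by (simp add: GR_def)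
  have lastP: "\<not> occ_O A (t' ! length t)"
    using play_parity[OF pt, of "length t"] et by (simp add: t'_def)
  have tn: "t' ! i = t ! i" if "i < length t" for i using that by (simp add: t'_def nth_append)
  have sn: "s' ! i = s ! i" if "i < length t" for i using that ls by (simp add: s'_def nth_append)
  define D where "D = {(i,k). i < length t \<and> occ_O A (t!i) \<and> k < length (inst (t!i))}"
  define F where "F = (\<lambda>(i,k). Oinst_vars (t!i) ! k)"
  define G where "G = (\<lambda>(i,k). Oinst_vars (s!i) ! k)"
  have lenI: "length (inst (s!i)) = length (inst (t!i))" if "i < length t" for i
    using play_facts(1)[OF ps, of i] play_facts(1)[OF pt, of i] GRi[of i] that ls tn sn
    by (simp add: s'_def t'_def)
  have occS: "occ_O A (s!i) = occ_O A (t!i)" if "i < length t" for i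
    using GRi[of i] that ls by (simp add: occ_O_def)
  have finD: "finite D"
    by (rule finite_subset[of _ "SIGMA i:{..<length t}. {..<length (inst (t!i))}"])
       (auto simp: D_def)
  have injF: "inj_on F D"
  proof (rule inj_onI)
    fix p q assume "p \<in> D" "q \<in> D" "F p = F q"
    then obtain i k j l where "p = (i,k)" "q = (j,l)" "i < length t" "j < length t"
      "occ_O A (t!i)" "occ_O A (t!j)" "k < length (inst (t!i))" "l < length (inst (t!j))"
      "Oinst_vars (t!i) ! k = Oinst_vars (t!j) ! l"
      by (auto simp: D_def F_def)
    with distinct_concat_filter[OF play_distinct[OF pt], of i j k l] tn
    show "p = q" by (auto simp: t'_def Oinst_vars_def)
  qed
  have injG: "inj_on G D"
  proof (rule inj_onI)
    fix p q assume "p \<in> D" "q \<in> D" "G p = G q"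
    then obtain i k j l where "p = (i,k)" "q = (j,l)" "i < length t" "j < length t"
      "occ_O A (t!i)" "occ_O A (t!j)" "k < length (inst (t!i))" "l < length (inst (t!j))"
      "Oinst_vars (s!i) ! k = Oinst_vars (s!j) ! l"
      by (auto simp: D_def G_def)
    with distinct_concat_filter[OF play_distinct[OF ps], of i j k l] sn lenI occS ls
    show "p = q" by (auto simp: s'_def Oinst_vars_def)
  qed
  define X where "X = F ` D"
  define h where "h = G \<circ> the_inv_into D F"
  have hF: "h (F p) = G p" if "p \<in> D" for p
    using the_inv_into_f_f[OF injF that] by (simp add: h_def)
  have injh: "inj_on h X"
    unfolding h_def X_def
    by (rule comp_inj_on) (auto simp: inj_on_the_inv_into[OF injF] the_inv_into_onto[OF injF] injG)
  have finX: "finite (h ` X)" using finD by (simp add: X_def)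
  define c where "c = Suc (Max (h ` X))"
  define \<rho> where "\<rho> = (\<lambda>x. if x \<in> X then h x else x + c)"
  have hc: "h x < c" if "x \<in> X" for x
    using Max_ge[OF finX, of "h x"] that by (simp add: c_def)
  have injr: "inj \<rho>"
  proof (rule injI)
    fix x y assume e: "\<rho> x = \<rho> y"
    show "x = y"
    proof (cases "x \<in> X"; cases "y \<in> X")
      assume "x \<in> X" "y \<in> X" with e injh show ?thesis by (auto simp: \<rho>_def inj_on_def)
    next
      assume "x \<in> X" "y \<notin> X" with e hc[of x] show ?thesis by (auto simp: \<rho>_def)
    next
      assume "x \<notin> X" "y \<in> X" with e hc[of y] show ?thesis by (auto simp: \<rho>_def)
    next
      assume "x \<notin> X" "y \<notin> X" with e show ?thesis by (auto simp: \<rho>_def)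
    qed
  qed
  have rF: "\<rho> (F p) = G p" if "p \<in> D" for p
    using that hF by (auto simp: \<rho>_def X_def)
  have u: "rename \<rho> t' \<in> \<sigma>"
    using st assms(4) injr unfolding strategy_def O_renaming_def t'_def by blast
  have "rename \<rho> t' = s'"
  proof (rule det_eq[OF st u])
    show "s' \<in> \<sigma>" using assms(3) by (simp add: s'_def)
    show "length (rename \<rho> t') = length s'" using ls by (simp add: rename_def s'_def t'_def)
    fix i assume il: "i < length (rename \<rho> t')" and oi: "occ_O A (rename \<rho> t' ! i)"
    have ui: "rename \<rho> t' ! i = (t'!i)\<lparr>inst := map (rename_trm \<rho>) (inst (t'!i))\<rparr>"
      using il by (simp add: rename_def)
    have il': "i < length t'" using il by (simp add: rename_def)
    have oi': "occ_O A (t'!i)" using oi ui by (simp add: occ_O_def)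
    have it: "i < length t" using il' oi' lastP by (cases "i = length t") (auto simp: t'_def)
    have oT: "occ_O A (t!i)" using oi' tn it by simp
    have oS: "occ_O A (s!i)" using oT occS it by simp
    have its: "i < length s'" "i < length t'" using it ls by (auto simp: s'_def t'_def)
    have mupeq: "mup (t!i) = mup (s!i)"
    proof (rule nth_equalityI)
      show "length (mup (t!i)) = length (mup (s!i))"
        using play_facts(2)[OF ps its(1)] play_facts(2)[OF pt its(2)] GRi[of i] it ls sn tn by simp
      fix k assume "k < length (mup (t!i))"
      moreover have "k < length (mup (s!i))"
        using calculation \<open>length (mup (t!i)) = length (mup (s!i))\<close> by simp
      ultimately show "mup (t!i) ! k = mup (s!i) ! k"
        using play_facts(4)[OF ps its(1)] play_facts(4)[OF pt its(2)] oS oT sn tn it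
          nth_mem[of k "mup (t!i)"] nth_mem[of k "mup (s!i)"] by (metis its(1,2))
    qed
    have insteq: "map (rename_trm \<rho>) (inst (t!i)) = inst (s!i)"
    proof (rule nth_equalityI)
      show "length (map (rename_trm \<rho>) (inst (t!i))) = length (inst (s!i))" using lenI it by simp
      fix k assume "k < length (map (rename_trm \<rho>) (inst (t!i)))"
      then have k: "k < length (inst (t!i))" by simp
      then have ks: "k < length (inst (s!i))" using lenI it by simp
      have D: "(i,k) \<in> D" using it oT k by (simp add: D_def)
      have a: "inst (t!i) ! k = Var (OV (F (i,k)))"
        using inst_nth_OV[OF _ k] play_facts(3)[OF pt its(2)] oi' tn it by (simp add: F_def)
      have b: "inst (s!i) ! k = Var (OV (G (i,k)))"
        using inst_nth_OV[OF _ ks] play_facts(3)[OF ps its(1)] oS sn it by (simp add: G_def)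
      show "map (rename_trm \<rho>) (inst (t!i)) ! k = inst (s!i) ! k"
        using k a b rF[OF D] by (simp add: rename_trm_def)
    qed
    show "rename \<rho> t' ! i = s' ! i"
      unfolding ui using tn[OF it] sn[OF it] GRi[of i] it ls mupeq insteq
      by (auto intro: occ.equality)
  qed
  then show ?thesis using injr unfolding O_renaming_def s'_def t'_def by metis
qed

end
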